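(* Let $0<\alpha<1$ and $p,q>0$. If $\lambda_1(SG_{\alpha,p}(A,B))\le\lambda_1(\mathcal{A}_{\alpha,q}(A,B))$ holds for all positive definite $2\times2$ matrices $A,B$, then $q/p\ge\max\{\alpha,1-\alpha\}$. Hence, if $SG_{\alpha,p}(A,B)\prec_w\mathcal{A}_{\alpha,q}(A,B)$ for all positive definite $2\times2$ matrices $A,B$, then $q/p\ge\max\{\alpha,1-\alpha\}$.
   Context: For positive definite $A,B$: $A\#B:=A^{1/2}(A^{-1/2}BA^{-1/2})^{1/2}A^{1/2}$; $F_\alpha(A,B):=(A^{-1}\#B)^\alpha A(A^{-1}\#B)^\alpha$; $SG_{\alpha,p}(A,B):=F_\alpha(A^p,B^p)^{1/p}$; $\mathcal{A}_{\alpha,q}(A,B):=((1-\alpha)A^q+\alpha B^q)^{1/q}$. For an $n\times n$ positive semidefinite $X$, $\lambda_1(X)\ge\dots\ge\lambda_n(X)$ are its eigenvalues in decreasing order with multiplicities. $X\prec_wY$ (weak majorization) means $\sum_{i=1}^k\lambda_i(X)\le\sum_{i=1}^k\lambda_i(Y)$ for $1\le k\le n$. *)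

theory Defs
  imports "HOL-Analysis.Analysis"
begin

type_synonym cmat2 = "complex^2^2"

definition adj2 :: "cmat2 \<Rightarrow> cmat2" where
  "adj2 A = (\<chi> i j. cnj (A $ j $ i))"

definition hermitian2 :: "cmat2 \<Rightarrow> bool" where
  "hermitian2 A \<longleftrightarrow> adj2 A = A"

definition posdef2 :: "cmat2 \<Rightarrow> bool" where
  "posdef2 A \<longleftrightarrow> hermitian2 A \<and>
     (\<forall>x::complex^2. x \<noteq> 0 \<longrightarrow>
        (\<Sum>i\<in>UNIV. cnj (x $ i) * (A *v x) $ i) \<in> \<real> \<and>
        Re (\<Sum>i\<in>UNIV. cnj (x $ i) * (A *v x) $ i) > 0)"

definition unitary2 :: "cmat2 \<Rightarrow> bool" where
  "unitary2 U \<longleftrightarrow> adj2 U ** U = mat 1"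

definition rdiag2 :: "(2 \<Rightarrow> real) \<Rightarrow> cmat2" where
  "rdiag2 d = (\<chi> i j. if i = j then complex_of_real (d i) else 0)"

text \<open>Real power A^r of a positive definite matrix via the spectral decomposition
  (functional calculus); well defined for positive definite A.\<close>
definition mpow :: "cmat2 \<Rightarrow> real \<Rightarrow> cmat2" where
  "mpow A r = (THE B. \<exists>U d. unitary2 U \<and> (\<forall>i. d i > 0) \<and>
       A = U ** rdiag2 d ** adj2 U \<and> B = U ** rdiag2 (\<lambda>i. d i powr r) ** adj2 U)"

definition gmean :: "cmat2 \<Rightarrow> cmat2 \<Rightarrow> cmat2" where
  "gmean A B = mpow A (1/2) **
      mpow (mpow A (-1/2) ** B ** mpow A (-1/2)) (1/2) ** mpow A (1/2)"

definition Falpha :: "real \<Rightarrow> cmat2 \<Rightarrow> cmat2 \<Rightarrow> cmat2" where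
  "Falpha \<alpha> A B = mpow (gmean (mpow A (-1)) B) \<alpha> ** A ** mpow (gmean (mpow A (-1)) B) \<alpha>"

definition SG :: "real \<Rightarrow> real \<Rightarrow> cmat2 \<Rightarrow> cmat2 \<Rightarrow> cmat2" where
  "SG \<alpha> p A B = mpow (Falpha \<alpha> (mpow A p) (mpow B p)) (1/p)"

definition AM :: "real \<Rightarrow> real \<Rightarrow> cmat2 \<Rightarrow> cmat2 \<Rightarrow> cmat2" where
  "AM \<alpha> q A B = mpow (((1 - \<alpha>) *\<^sub>R mpow A q) + (\<alpha> *\<^sub>R mpow B q)) (1/q)"

definition eigvals2 :: "cmat2 \<Rightarrow> complex set" where
  "eigvals2 X = {c. \<exists>v. v \<noteq> 0 \<and> X *v v = c *s v}"

definition lam1 :: "cmat2 \<Rightarrow> real" where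
  "lam1 X = Max (Re ` eigvals2 X)"

definition lam2 :: "cmat2 \<Rightarrow> real" where
  "lam2 X = Min (Re ` eigvals2 X)"

definition weak_maj2 :: "cmat2 \<Rightarrow> cmat2 \<Rightarrow> bool" where
  "weak_maj2 X Y \<longleftrightarrow> lam1 X \<le> lam1 Y \<and> lam1 X + lam2 X \<le> lam1 Y + lam2 Y"

end

theory Submission
  imports Defs
begin


definition m2 :: "real \<Rightarrow> real \<Rightarrow> real \<Rightarrow> real \<Rightarrow> cmat2" where
  "m2 a b c d = (\<chi> i j. complex_of_real (if i = 1 then (if j = 1 then a else b) else (if j = 1 then c else d)))"

lemma two_ne1[simp]: "(2::2) \<noteq> 1" "(1::2) \<noteq> 2" by auto

lemma m2_nth[simp]: "m2 a b c d $ 1 $ 1 = a" "m2 a b c d $ 1 $ 2 = b"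
  "m2 a b c d $ 2 $ 1 = c" "m2 a b c d $ 2 $ 2 = d"
  by (simp_all add: m2_def)

lemma cmat2_eqI: "(A::cmat2) $ 1 $ 1 = B $ 1 $ 1 \<Longrightarrow> A $ 1 $ 2 = B $ 1 $ 2 \<Longrightarrow>
   A $ 2 $ 1 = B $ 2 $ 1 \<Longrightarrow> A $ 2 $ 2 = B $ 2 $ 2 \<Longrightarrow> A = B"
  by (simp add: vec_eq_iff forall_2)

lemma m2_mult[simp]: "m2 a b c d ** m2 e f g h = m2 (a*e+b*g) (a*f+b*h) (c*e+d*g) (c*f+d*h)"
  by (rule cmat2_eqI) (simp_all add: matrix_matrix_mult_def sum_2)

lemma adj2_m2[simp]: "adj2 (m2 a b c d) = m2 a c b d"
  by (rule cmat2_eqI) (simp_all add: adj2_def)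

lemma rdiag2_m2: "rdiag2 d = m2 (d 1) 0 0 (d 2)"
  by (rule cmat2_eqI) (simp_all add: rdiag2_def)

lemma mat1_m2: "mat 1 = m2 1 0 0 1"
  by (rule cmat2_eqI) (simp_all add: mat_def)

lemma scaleR_m2[simp]: "r *\<^sub>R m2 a b c d = m2 (r*a) (r*b) (r*c) (r*d)"
  by (rule cmat2_eqI) (simp_all only: vector_scaleR_component m2_nth, simp_all add: scaleR_conv_of_real)

lemma add_m2[simp]: "m2 a b c d + m2 e f g h = m2 (a+e) (b+f) (c+g) (d+h)"
  by (rule cmat2_eqI) simp_all

lemma m2_eq_iff: "m2 a b c d = m2 e f g h \<longleftrightarrow> a = e \<and> b = f \<and> c = g \<and> d = h"
  by (metis m2_nth of_real_eq_iff)

lemma adj2_mult: "adj2 (A ** B) = adj2 B ** adj2 A"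
  by (simp add: adj2_def vec_eq_iff matrix_matrix_mult_def sum_2 mult.commute)

lemma adj2_adj2[simp]: "adj2 (adj2 A) = A"
  by (simp add: adj2_def vec_eq_iff)

lemma adj2_rdiag2[simp]: "adj2 (rdiag2 d) = rdiag2 d"
  by (simp add: adj2_def rdiag2_def vec_eq_iff)

lemma rdiag2_mult: "rdiag2 d ** rdiag2 e = rdiag2 (\<lambda>i. d i * e i)"
  by (simp add: rdiag2_m2)

lemma unitary2_right: "unitary2 U \<Longrightarrow> U ** adj2 U = mat 1"
  unfolding unitary2_def using matrix_left_right_inverse by blast


lemma mult_rdiag2_nth: "(A ** rdiag2 d) $ i $ j = A $ i $ j * d j"
  using exhaust_2[of j] by (auto simp: matrix_matrix_mult_def sum_2 rdiag2_def)

lemma rdiag2_mult_nth: "(rdiag2 d ** A) $ i $ j = d i * A $ i $ j"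
  using exhaust_2[of i] by (auto simp: matrix_matrix_mult_def sum_2 rdiag2_def)

lemma spec_unique:
  assumes U: "unitary2 U" and V: "unitary2 V"
    and eq: "U ** rdiag2 d ** adj2 U = V ** rdiag2 e ** adj2 V"
  shows "U ** rdiag2 (\<lambda>i. d i powr r) ** adj2 U = V ** rdiag2 (\<lambda>i. e i powr r) ** adj2 V"
proof -
  define W where "W = adj2 V ** U"
  have UU: "adj2 U ** U = mat 1" using U unitary2_def by auto
  have VV: "adj2 V ** V = mat 1" using V unitary2_def by auto
  have UU': "U ** adj2 U = mat 1" using U unitary2_right by auto
  have VV': "V ** adj2 V = mat 1" using V unitary2_right by auto
  have "adj2 V ** (U ** rdiag2 d ** adj2 U) ** U = adj2 V ** (V ** rdiag2 e ** adj2 V) ** U"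
    using eq by simp
  hence WD: "W ** rdiag2 d = rdiag2 e ** W"
    by (simp add: W_def matrix_mul_assoc UU VV)
      (metis UU VV matrix_mul_assoc matrix_mul_lid matrix_mul_rid)
  have WDr: "W ** rdiag2 (\<lambda>i. d i powr r) = rdiag2 (\<lambda>i. e i powr r) ** W"
  proof -
    have "W $ i $ j * d j powr r = e i powr r * W $ i $ j" for i j
    proof -
      have "W $ i $ j * d j = e i * W $ i $ j"
        using arg_cong[OF WD, of "\<lambda>M. M $ i $ j"] by (simp add: mult_rdiag2_nth rdiag2_mult_nth)
      hence "W $ i $ j = 0 \<or> d j = e i" by (auto simp: mult.commute)
      thus ?thesis by auto
    qed
    thus ?thesis by (simp add: vec_eq_iff mult_rdiag2_nth rdiag2_mult_nth)
  qed
  have "U ** rdiag2 (\<lambda>i. d i powr r) ** adj2 U = V ** (W ** rdiag2 (\<lambda>i. d i powr r)) ** adj2 U"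
    by (simp add: W_def matrix_mul_assoc VV')
  also have "\<dots> = V ** rdiag2 (\<lambda>i. e i powr r) ** (W ** adj2 U)"
    by (simp add: WDr matrix_mul_assoc)
  also have "W ** adj2 U = adj2 V"
    by (simp add: W_def UU' flip: matrix_mul_assoc)
  finally show ?thesis .
qed

lemma mpow_eq:
  assumes U: "unitary2 U" and d: "\<forall>i. d i > 0" and M: "M = U ** rdiag2 d ** adj2 U"
  shows "mpow M r = U ** rdiag2 (\<lambda>i. d i powr r) ** adj2 U"
  unfolding mpow_def
proof (rule the_equality)
  show "\<exists>U' d'. unitary2 U' \<and> (\<forall>i. d' i > 0) \<and> M = U' ** rdiag2 d' ** adj2 U' \<and>
     U ** rdiag2 (\<lambda>i. d i powr r) ** adj2 U = U' ** rdiag2 (\<lambda>i. d' i powr r) ** adj2 U'"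
    using assms by blast
next
  fix B assume "\<exists>U' d'. unitary2 U' \<and> (\<forall>i. d' i > 0) \<and> M = U' ** rdiag2 d' ** adj2 U' \<and>
     B = U' ** rdiag2 (\<lambda>i. d' i powr r) ** adj2 U'"
  then obtain U' d' where "unitary2 U'" "M = U' ** rdiag2 d' ** adj2 U'"
     "B = U' ** rdiag2 (\<lambda>i. d' i powr r) ** adj2 U'" by blast
  thus "B = U ** rdiag2 (\<lambda>i. d i powr r) ** adj2 U"
    using spec_unique[OF U \<open>unitary2 U'\<close>, of d d' r] M by simp
qed

lemma unitary2_adj2: "unitary2 U \<Longrightarrow> unitary2 (adj2 U)"
  using unitary2_right unitary2_def by simp

lemma eigvals2_conj:
  assumes U: "unitary2 U"
  shows "eigvals2 (U ** rdiag2 e ** adj2 U) = {complex_of_real (e 1), complex_of_real (e 2)}"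
proof -
  have UU: "adj2 U ** U = mat 1" using U unitary2_def by auto
  have UU': "U ** adj2 U = mat 1" using U unitary2_right by auto
  let ?M = "U ** rdiag2 e ** adj2 U"
  have key: "?M *v v = c *s v \<longleftrightarrow> rdiag2 e *v (adj2 U *v v) = c *s (adj2 U *v v)" for v c
  proof
    assume "?M *v v = c *s v"
    hence "adj2 U *v (?M *v v) = adj2 U *v (c *s v)" by simp
    thus "rdiag2 e *v (adj2 U *v v) = c *s (adj2 U *v v)"
      by (simp add: matrix_vector_mul_assoc vector_scalar_commute matrix_mul_assoc UU)
  next
    assume "rdiag2 e *v (adj2 U *v v) = c *s (adj2 U *v v)"
    hence "U *v (rdiag2 e *v (adj2 U *v v)) = U *v (c *s (adj2 U *v v))" by simp
    thus "?M *v v = c *s v"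
      by (simp add: matrix_vector_mul_assoc vector_scalar_commute UU' matrix_mul_assoc)
  qed
  have nz: "v \<noteq> 0 \<longleftrightarrow> adj2 U *v v \<noteq> 0" for v
    by (metis UU' matrix_vector_mul_assoc matrix_vector_mul_lid matrix_vector_mult_0_right)
  have diag: "(rdiag2 e *v w) $ i = e i * w $ i" for w i
    using exhaust_2[of i] by (auto simp: matrix_vector_mult_def sum_2 rdiag2_def)
  show ?thesis
  proof (intro set_eqI iffI)
    fix c assume "c \<in> eigvals2 ?M"
    then obtain v where v: "v \<noteq> 0" "?M *v v = c *s v" unfolding eigvals2_def by blast
    define w where "w = adj2 U *v v"
    have w0: "w \<noteq> 0" using nz v w_def by auto
    have "rdiag2 e *v w = c *s w" using key v w_def by auto
    hence eq: "e i * w $ i = c * w $ i" for i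
      by (metis diag vector_scalar_mult_def vec_lambda_beta)
    obtain i where "w $ i \<noteq> 0" using w0 by (metis vec_eq_iff zero_index)
    hence "c = e i" using eq[of i] by simp
    thus "c \<in> {complex_of_real (e 1), complex_of_real (e 2)}" using exhaust_2[of i] by auto
  next
    fix c assume c: "c \<in> {complex_of_real (e 1), complex_of_real (e 2)}"
    then obtain i where ci: "c = e i" by auto
    define v where "v = U *v axis i 1"
    have w: "adj2 U *v v = axis i 1"
      by (simp add: v_def matrix_vector_mul_assoc UU)
    have "rdiag2 e *v axis i 1 = c *s axis i (1::complex)"
      by (simp add: vec_eq_iff diag ci axis_def)
    hence "?M *v v = c *s v" using key w by simp
    moreover have "v \<noteq> 0" using nz[of v] w by (metis axis_eq_0_iff one_neq_zero)
    ultimately show "c \<in> eigvals2 ?M" unfolding eigvals2_def by blast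
  qed
qed

lemma lam1_conj:
  assumes "unitary2 U"
  shows "lam1 (U ** rdiag2 e ** adj2 U) = max (e 1) (e 2)"
  unfolding lam1_def eigvals2_conj[OF assms] by simp

lemma hermitian_conj: "hermitian2 (U ** rdiag2 e ** adj2 U)"
  by (simp add: hermitian2_def adj2_mult matrix_mul_assoc)

lemma qf_conj:
  "(\<Sum>i\<in>UNIV. cnj (x $ i) * ((U ** B ** adj2 U) *v x) $ i) =
   (\<Sum>k\<in>UNIV. cnj ((adj2 U *v x) $ k) * (B *v (adj2 U *v x)) $ k)"
  by (simp add: sum_2 matrix_vector_mult_def matrix_matrix_mult_def adj2_def algebra_simps)

lemma posdef_conj:
  assumes U: "unitary2 U" and d: "\<forall>i. d i > 0"
  shows "posdef2 (U ** rdiag2 d ** adj2 U)"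
  unfolding posdef2_def
proof (intro conjI allI impI hermitian_conj)
  fix x :: "complex^2" assume x: "x \<noteq> 0"
  have UU': "U ** adj2 U = mat 1" using U unitary2_right by auto
  define w where "w = adj2 U *v x"
  have w0: "w \<noteq> 0" using x UU' unfolding w_def
    by (metis matrix_vector_mul_assoc matrix_vector_mul_lid matrix_vector_mult_0_right)
  have diag: "(rdiag2 d *v w) $ i = d i * w $ i" for i
    using exhaust_2[of i] by (auto simp: matrix_vector_mult_def sum_2 rdiag2_def)
  have "(\<Sum>i\<in>UNIV. cnj (x $ i) * ((U ** rdiag2 d ** adj2 U) *v x) $ i)
     = (\<Sum>k\<in>UNIV. cnj (w $ k) * (d k * w $ k))"
    unfolding qf_conj w_def[symmetric] diag ..
  also have "\<dots> = of_real (\<Sum>k\<in>UNIV. d k * (cmod (w $ k))\<^sup>2)"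
  proof -
    have "cnj z * (of_real r * z) = of_real (r * (cmod z)\<^sup>2)" for z r
    proof -
      have "cnj z * (of_real r * z) = of_real r * (z * cnj z)" by (simp add: mult_ac)
      also have "\<dots> = of_real (r * (cmod z)\<^sup>2)" by (simp only: complex_norm_square[symmetric] of_real_mult)
      finally show ?thesis .
    qed
    thus ?thesis by (simp only: sum_2 of_real_add)
  qed
  finally have eq: "(\<Sum>i\<in>UNIV. cnj (x $ i) * ((U ** rdiag2 d ** adj2 U) *v x) $ i)
     = of_real (\<Sum>k\<in>UNIV. d k * (cmod (w $ k))\<^sup>2)" .
  obtain i where "w $ i \<noteq> 0" using w0 by (metis vec_eq_iff zero_index)
  hence pos: "(\<Sum>k\<in>UNIV. d k * (cmod (w $ k))\<^sup>2) > 0"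
  proof -
    have nn: "0 \<le> d k * (cmod (w $ k))\<^sup>2" for k using d by (simp add: less_imp_le)
    have "0 < d i * (cmod (w $ i))\<^sup>2" using d \<open>w $ i \<noteq> 0\<close> by simp
    thus ?thesis using exhaust_2[of i] nn[of 1] nn[of 2] by (auto simp: sum_2)
  qed
  show "(\<Sum>i\<in>UNIV. cnj (x $ i) * ((U ** rdiag2 d ** adj2 U) *v x) $ i) \<in> \<real>"
    unfolding eq by simp
  show "Re (\<Sum>i\<in>UNIV. cnj (x $ i) * ((U ** rdiag2 d ** adj2 U) *v x) $ i) > 0"
    unfolding eq using pos by simp
qed



lemma mm_distribs:
  fixes A B C :: cmat2
  shows "A ** (B + C) = A ** B + A ** C" "(B + C) ** A = B ** A + C ** A"
    "A ** (r *\<^sub>R B) = r *\<^sub>R (A ** B)" "(r *\<^sub>R B) ** A = r *\<^sub>R (B ** A)"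
proof -
  show "A ** (B + C) = A ** B + A ** C" "(B + C) ** A = B ** A + C ** A"
    by (simp_all add: vec_eq_iff forall_2 matrix_matrix_mult_def sum_2 algebra_simps)
  show "A ** (r *\<^sub>R B) = r *\<^sub>R (A ** B)" "(r *\<^sub>R B) ** A = r *\<^sub>R (B ** A)"
    by (simp_all add: vec_eq_iff matrix_matrix_mult_def scaleR_sum_right)
qed

definition ms :: "real \<Rightarrow> real \<Rightarrow> real \<Rightarrow> real" where
  "ms l1 l2 r = (if l1 = l2 then 0 else (l1 powr r - l2 powr r) / (l1 - l2))"
definition mt :: "real \<Rightarrow> real \<Rightarrow> real \<Rightarrow> real" where
  "mt l1 l2 r = (if l1 = l2 then l1 powr r else (l1 * l2 powr r - l2 * l1 powr r) / (l1 - l2))"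

lemma interp:
  assumes U: "unitary2 U"
  shows "U ** rdiag2 (\<lambda>i. d i powr r) ** adj2 U =
    ms (d 1) (d 2) r *\<^sub>R (U ** rdiag2 d ** adj2 U) + mt (d 1) (d 2) r *\<^sub>R mat 1"
proof -
  have UU': "U ** adj2 U = mat 1" using U unitary2_right by auto
  have k: "ms l1 l2 r * l1 + mt l1 l2 r = l1 powr r \<and> ms l1 l2 r * l2 + mt l1 l2 r = l2 powr r" for l1 l2
  proof (cases "l1 = l2")
    case True thus ?thesis by (simp add: ms_def mt_def)
  next
    case False
    hence nz: "l1 - l2 \<noteq> 0" by simp
    have "ms l1 l2 r * l1 + mt l1 l2 r = ((l1 powr r - l2 powr r) * l1 + (l1 * l2 powr r - l2 * l1 powr r)) / (l1 - l2)"
      using False by (simp add: ms_def mt_def add_divide_distrib)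
    also have "(l1 powr r - l2 powr r) * l1 + (l1 * l2 powr r - l2 * l1 powr r) = l1 powr r * (l1 - l2)"
      by (simp add: algebra_simps)
    finally have 1: "ms l1 l2 r * l1 + mt l1 l2 r = l1 powr r" using nz by simp
    have "ms l1 l2 r * l2 + mt l1 l2 r = ((l1 powr r - l2 powr r) * l2 + (l1 * l2 powr r - l2 * l1 powr r)) / (l1 - l2)"
      using False by (simp add: ms_def mt_def add_divide_distrib)
    also have "(l1 powr r - l2 powr r) * l2 + (l1 * l2 powr r - l2 * l1 powr r) = l2 powr r * (l1 - l2)"
      by (simp add: algebra_simps)
    finally have 2: "ms l1 l2 r * l2 + mt l1 l2 r = l2 powr r" using nz by simp
    show ?thesis using 1 2 by simp
  qed
  have D: "rdiag2 (\<lambda>i. d i powr r) = ms (d 1) (d 2) r *\<^sub>R rdiag2 d + mt (d 1) (d 2) r *\<^sub>R mat 1"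
    unfolding rdiag2_m2 mat1_m2 using k[of "d 1" "d 2"]
    by (simp add: m2_eq_iff mult.commute)
  show ?thesis
    unfolding D by (simp add: mm_distribs UU' matrix_mul_assoc)
qed

definition ev1 :: "real \<Rightarrow> real \<Rightarrow> real \<Rightarrow> real" where
  "ev1 a b c = (a + c) / 2 + sqrt (((a - c) / 2)\<^sup>2 + b\<^sup>2)"
definition ev2 :: "real \<Rightarrow> real \<Rightarrow> real \<Rightarrow> real" where
  "ev2 a b c = (a + c) / 2 - sqrt (((a - c) / 2)\<^sup>2 + b\<^sup>2)"

lemma ev_char: "(ev1 a b c - a) * (ev1 a b c - c) = b\<^sup>2"
proof -
  define s where "s = sqrt (((a - c) / 2)\<^sup>2 + b\<^sup>2)"
  have s2: "s\<^sup>2 = ((a - c) / 2)\<^sup>2 + b\<^sup>2" unfolding s_def by simp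
  have 1: "ev1 a b c - a = s - (a - c) / 2" unfolding ev1_def s_def[symmetric] by (simp add: field_simps)
  have 2: "ev1 a b c - c = s + (a - c) / 2" unfolding ev1_def s_def[symmetric] by (simp add: field_simps)
  have "(ev1 a b c - a) * (ev1 a b c - c) = s\<^sup>2 - ((a - c) / 2)\<^sup>2"
    unfolding 1 2 by (simp add: algebra_simps power2_eq_square)
  thus ?thesis using s2 by simp
qed

lemma ev_sum: "ev1 a b c + ev2 a b c = a + c"
  by (simp add: ev1_def ev2_def)

lemma ev1_ge: "ev1 a b c \<ge> a \<and> ev1 a b c \<ge> c"
proof -
  define s where "s = sqrt (((a - c) / 2)\<^sup>2 + b\<^sup>2)"
  have "s \<ge> sqrt (((a - c) / 2)\<^sup>2)" unfolding s_def
    by (rule real_sqrt_le_mono) simp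
  hence "\<bar>(a - c) / 2\<bar> \<le> s" by simp
  hence "\<bar>a - c\<bar> \<le> 2 * s" by simp
  moreover have "2 * ev1 a b c = a + c + 2 * s" by (simp add: ev1_def s_def)
  ultimately show ?thesis using abs_ge_self[of "a - c"] abs_ge_minus_self[of "a - c"] by linarith
qed

lemma ev12_le: "ev2 a b c \<le> ev1 a b c"
  by (simp add: ev1_def ev2_def)

lemma ev2_pos: assumes "a > 0" "a * c > b\<^sup>2" shows "ev2 a b c > 0"
proof -
  have c: "c > 0"
  proof (rule ccontr)
    assume "\<not> c > 0"
    hence "a * c \<le> 0" using assms(1) by (simp add: mult_nonneg_nonpos)
    thus False using assms(2) by (smt (verit) zero_le_power2)
  qed
  have "((a + c) / 2)\<^sup>2 - ((a - c) / 2)\<^sup>2 = a * c"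
    by (simp add: power2_eq_square field_simps)
  hence "((a - c) / 2)\<^sup>2 + b\<^sup>2 < ((a + c) / 2)\<^sup>2"
    using assms by simp
  hence "sqrt (((a - c) / 2)\<^sup>2 + b\<^sup>2) < sqrt (((a + c) / 2)\<^sup>2)"
    by (simp only: real_sqrt_less_iff)
  also have "\<dots> = (a + c) / 2" using assms c by simp
  finally show ?thesis unfolding ev2_def by simp
qed

lemma spec_exists:
  "\<exists>U. unitary2 U \<and> m2 a b b c = U ** rdiag2 (\<lambda>i. if i = 1 then ev1 a b c else ev2 a b c) ** adj2 U"
proof -
  define l where "l = ev1 a b c"
  define l' where "l' = ev2 a b c"
  have l'_eq: "l' = a + c - l" using ev_sum[of a b c] l_def l'_def by simp
  have ch: "(l - a) * (l - c) = b\<^sup>2" using ev_char l_def by simp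
  have D: "rdiag2 (\<lambda>i. if i = 1 then ev1 a b c else ev2 a b c) = m2 l 0 0 l'"
    by (simp add: rdiag2_m2 l_def l'_def)
  show ?thesis
  proof (cases "b = 0")
    case True
    have s: "sqrt (((a - c) / 2)\<^sup>2 + b\<^sup>2) = \<bar>a - c\<bar> / 2" using True by simp
    show ?thesis
    proof (cases "a \<ge> c")
      case True
      hence "\<bar>a - c\<bar> = a - c" by simp
      hence "l = a" "l' = c" using s by (simp_all add: l_def l'_def ev1_def ev2_def field_simps)
      thus ?thesis using \<open>b = 0\<close> 
        by (intro exI[of _ "m2 1 0 0 1"]) (simp add: unitary2_def D mat1_m2)
    next
      case False
      hence "\<bar>a - c\<bar> = c - a" by simp
      hence "l = c" "l' = a" using s by (simp_all add: l_def l'_def ev1_def ev2_def field_simps)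
      thus ?thesis using \<open>b = 0\<close> 
        by (intro exI[of _ "m2 0 (-1) 1 0"]) (simp add: unitary2_def D mat1_m2)
    qed
  next
    case False
    define e where "e = l - a"
    define n where "n = sqrt (b\<^sup>2 + e\<^sup>2)"
    have n2: "n\<^sup>2 = b\<^sup>2 + e\<^sup>2" unfolding n_def by simp
    have npos: "n > 0" using False unfolding n_def by (simp add: add_pos_nonneg)
    have ch': "e * (l - c) = b\<^sup>2" using ch e_def by simp
    define x where "x = b / n"
    define y where "y = e / n"
    have xx: "x * x = b\<^sup>2 / n\<^sup>2" "y * y = e\<^sup>2 / n\<^sup>2" "x * y = b * e / n\<^sup>2"
      by (simp_all add: x_def y_def power2_eq_square)
    have n20: "n\<^sup>2 \<noteq> 0" using npos by simp
    have xy: "x\<^sup>2 + y\<^sup>2 = 1" using n2 n20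
      by (simp add: power2_eq_square xx add_divide_distrib[symmetric])
    have U: "unitary2 (m2 x (-y) y x)"
      using xy by (simp add: unitary2_def mat1_m2 power2_eq_square add.commute)
    have e1: "x * x * l + y * y * l' = a"
    proof -
      have "b\<^sup>2 * l + e\<^sup>2 * l' - a * (b\<^sup>2 + e\<^sup>2) = e * (b\<^sup>2 - e * (l - c))"
        unfolding l'_eq e_def by (simp add: algebra_simps power2_eq_square)
      hence H: "b\<^sup>2 * l + e\<^sup>2 * l' = a * n\<^sup>2" using ch' n2 by simp
      have "x * x * l + y * y * l' = (b\<^sup>2 * l + e\<^sup>2 * l') / n\<^sup>2"
        unfolding xx by (simp add: add_divide_distrib)
      also have "\<dots> = a" using H n20 by simp
      finally show ?thesis .
    qed
    have e2: "x * y * l - x * y * l' = b"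
    proof -
      have "b * e * (l - l') - b * (b\<^sup>2 + e\<^sup>2) = b * (e * (l - c) - b\<^sup>2)"
        unfolding l'_eq e_def by (simp add: algebra_simps power2_eq_square)
      hence H: "b * e * l - b * e * l' = b * n\<^sup>2" using ch' n2 by (simp add: algebra_simps)
      have "x * y * l - x * y * l' = (b * e * l - b * e * l') / n\<^sup>2"
        unfolding xx by (simp add: diff_divide_distrib)
      also have "\<dots> = b" using H n20 by simp
      finally show ?thesis .
    qed
    have e3: "y * y * l + x * x * l' = c"
    proof -
      have "e\<^sup>2 * l + b\<^sup>2 * l' - c * (b\<^sup>2 + e\<^sup>2) = e * (e * (l - c) - b\<^sup>2)"
        unfolding l'_eq e_def by (simp add: algebra_simps power2_eq_square)
      hence H: "e\<^sup>2 * l + b\<^sup>2 * l' = c * n\<^sup>2" using ch' n2 by simp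
      have "y * y * l + x * x * l' = (e\<^sup>2 * l + b\<^sup>2 * l') / n\<^sup>2"
        unfolding xx by (simp add: add_divide_distrib)
      also have "\<dots> = c" using H n20 by simp
      finally show ?thesis .
    qed
    show ?thesis
      using U e1 e2 e3 by (intro exI[of _ "m2 x (-y) y x"]) (simp add: D m2_eq_iff algebra_simps)
  qed
qed



definition posc :: "real \<Rightarrow> real \<Rightarrow> real \<Rightarrow> bool" where
  "posc a b c \<longleftrightarrow> a > 0 \<and> a * c > b\<^sup>2"

definition ED :: "real \<Rightarrow> real \<Rightarrow> real \<Rightarrow> 2 \<Rightarrow> real" where
  "ED a b c = (\<lambda>i. if i = 1 then ev1 a b c else ev2 a b c)"

lemma ED_pos: "posc a b c \<Longrightarrow> \<forall>i. ED a b c i > 0"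
  using ev2_pos[of a b c] ev12_le[of a b c] by (auto simp: ED_def posc_def)

lemma ED_12[simp]: "ED a b c 1 = ev1 a b c" "ED a b c 2 = ev2 a b c"
  by (simp_all add: ED_def)

lemma spec_posc: "\<exists>U. unitary2 U \<and> m2 a b b c = U ** rdiag2 (ED a b c) ** adj2 U"
  using spec_exists[of a b c] unfolding ED_def by blast

lemma mpow_posc:
  assumes "posc a b c"
  shows "mpow (m2 a b b c) r =
    m2 (ms (ev1 a b c) (ev2 a b c) r * a + mt (ev1 a b c) (ev2 a b c) r)
       (ms (ev1 a b c) (ev2 a b c) r * b) (ms (ev1 a b c) (ev2 a b c) r * b)
       (ms (ev1 a b c) (ev2 a b c) r * c + mt (ev1 a b c) (ev2 a b c) r)"
proof -
  obtain U where U: "unitary2 U" "m2 a b b c = U ** rdiag2 (ED a b c) ** adj2 U"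
    using spec_posc by blast
  have "mpow (m2 a b b c) r = U ** rdiag2 (\<lambda>i. ED a b c i powr r) ** adj2 U"
    by (rule mpow_eq[OF U(1) ED_pos[OF assms] U(2)])
  also have "\<dots> = ms (ev1 a b c) (ev2 a b c) r *\<^sub>R m2 a b b c + mt (ev1 a b c) (ev2 a b c) r *\<^sub>R mat 1"
    using interp[OF U(1), of "ED a b c" r] U(2) by simp
  finally show ?thesis by (simp add: mat1_m2)
qed

lemma lam1_mpow_posc:
  assumes "posc a b c" "r \<ge> 0"
  shows "lam1 (mpow (m2 a b b c) r) = ev1 a b c powr r"
proof -
  obtain U where U: "unitary2 U" "m2 a b b c = U ** rdiag2 (ED a b c) ** adj2 U"
    using spec_posc by blast
  have "mpow (m2 a b b c) r = U ** rdiag2 (\<lambda>i. ED a b c i powr r) ** adj2 U"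
    by (rule mpow_eq[OF U(1) ED_pos[OF assms(1)] U(2)])
  hence "lam1 (mpow (m2 a b b c) r) = max (ev1 a b c powr r) (ev2 a b c powr r)"
    using lam1_conj[OF U(1)] by simp
  also have "\<dots> = ev1 a b c powr r"
  proof -
    have "ev2 a b c > 0" using ED_pos[OF assms(1)] ED_12(2) by metis
    hence "ev2 a b c powr r \<le> ev1 a b c powr r"
      using powr_mono2[OF assms(2) _ ev12_le[of a b c]] by simp
    thus ?thesis by (simp add: max_def)
  qed
  finally show ?thesis .
qed

lemma posdef2_posc:
  assumes "posdef2 (m2 a b b c)"
  shows "posc a b c"
proof -
  have Q: "Re (\<Sum>i\<in>UNIV. cnj (x $ i) * (m2 a b b c *v x) $ i) > 0" if "x \<noteq> 0" for x
    using assms that unfolding posdef2_def by blast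
  define x1 :: "complex^2" where "x1 = (\<chi> i. if i = 1 then 1 else 0)"
  define x2 :: "complex^2" where "x2 = (\<chi> i. if i = 1 then - of_real b else of_real a)"
  have "x1 $ 1 = 1" by (simp add: x1_def)
  hence "x1 \<noteq> 0" by (metis zero_index zero_neq_one)
  from Q[OF this] have a: "a > 0"
    by (simp add: x1_def sum_2 matrix_vector_mult_def)
  have "x2 $ 2 = of_real a" by (simp add: x2_def)
  hence "x2 \<noteq> 0" using a by (metis less_irrefl of_real_eq_0_iff zero_index)
  from Q[OF this] have "a * (a * c - b\<^sup>2) > 0"
  proof -
    have "(\<Sum>i\<in>UNIV. cnj (x2 $ i) * (m2 a b b c *v x2) $ i) = of_real (a * (a * c - b\<^sup>2))"
      by (simp add: x2_def sum_2 matrix_vector_mult_def power2_eq_square algebra_simps)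
    thus ?thesis using Q[OF \<open>x2 \<noteq> 0\<close>] by simp
  qed
  hence "a * c - b\<^sup>2 > 0" using a by (simp add: zero_less_mult_iff)
  thus ?thesis using a by (simp add: posc_def)
qed

lemma posc_comb:
  assumes "posc a b c" "posc a' b' c'" "l > 0" "m > 0"
  shows "posc (l * a + m * a') (l * b + m * b') (l * c + m * c')"
proof -
  have a: "a > 0" "a' > 0" and d: "a * c > b\<^sup>2" "a' * c' > b'\<^sup>2" using assms by (auto simp: posc_def)
  have "a * c > 0" "a' * c' > 0" using d zero_le_power2[of b] zero_le_power2[of b'] by linarith+
  hence c: "c > 0" "c' > 0" using a by (simp_all add: zero_less_mult_iff)
  have "b\<^sup>2 * b'\<^sup>2 < (a * c) * (a' * c')"
    using d by (intro mult_strict_mono') auto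
  moreover have "(2 * b * b')\<^sup>2 = 4 * (b\<^sup>2 * b'\<^sup>2)" by (simp add: power_mult_distrib)
  ultimately have "(2 * b * b')\<^sup>2 < 4 * (a * c) * (a' * c')" by simp
  also have "4 * (a * c) * (a' * c') \<le> (a * c' + a' * c)\<^sup>2"
    using zero_le_power2[of "a * c' - a' * c"] by (simp add: power2_eq_square algebra_simps)
  finally have "(2 * b * b')\<^sup>2 < (a * c' + a' * c)\<^sup>2" .
  hence "\<bar>2 * b * b'\<bar>\<^sup>2 < \<bar>a * c' + a' * c\<bar>\<^sup>2" by simp
  hence "\<bar>2 * b * b'\<bar> < \<bar>a * c' + a' * c\<bar>" by (rule power_less_imp_less_base) simp
  moreover have "a * c' > 0" "a' * c > 0" using a c by simp_all
  ultimately have cross: "2 * b * b' < a * c' + a' * c" using abs_ge_self[of "2 * b * b'"] by simp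
  have "(l * a + m * a') * (l * c + m * c') - (l * b + m * b')\<^sup>2
     = l\<^sup>2 * (a * c - b\<^sup>2) + m\<^sup>2 * (a' * c' - b'\<^sup>2) + l * m * (a * c' + a' * c - 2 * b * b')"
    by (simp add: power2_eq_square algebra_simps)
  also have "\<dots> > 0" using d cross assms(3,4)
    by (intro add_pos_pos mult_pos_pos) auto
  finally show ?thesis using a assms(3,4) by (simp add: posc_def add_pos_pos)
qed

lemma det_m2: "det (m2 a b c d) = of_real (a * d - b * c)"
  by (simp add: det_2)

lemma det_conj:
  assumes "unitary2 U"
  shows "det (U ** rdiag2 e ** adj2 U) = of_real (e 1 * e 2)"
proof -
  have "det (U ** rdiag2 e ** adj2 U) = det (rdiag2 e) * (det (adj2 U) * det U)"
    by (simp add: det_mul mult_ac)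
  also have "det (adj2 U) * det U = 1"
    using assms unfolding unitary2_def by (metis det_mul det_I)
  finally show ?thesis by (simp add: rdiag2_m2 det_m2)
qed

lemma conj_powr:
  assumes "unitary2 U" "\<forall>i. d i > 0"
  shows "mpow (U ** rdiag2 (\<lambda>i. d i powr s) ** adj2 U) t = U ** rdiag2 (\<lambda>i. d i powr (s * t)) ** adj2 U"
proof -
  have nz: "\<forall>i. d i \<noteq> 0" using assms(2) by (metis less_irrefl)
  have "\<forall>i. d i powr s > 0" using nz by simp
  moreover note nz
  ultimately show ?thesis using mpow_eq[OF assms(1) _ refl, of "\<lambda>i. d i powr s" t]
    by (simp add: powr_powr)
qed

lemma conj_mult:
  assumes "unitary2 U"
  shows "(U ** rdiag2 d ** adj2 U) ** (U ** rdiag2 e ** adj2 U) = U ** rdiag2 (\<lambda>i. d i * e i) ** adj2 U"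
proof -
  have UU: "adj2 U ** U = mat 1" using assms unitary2_def by auto
  have "(U ** rdiag2 d ** adj2 U) ** (U ** rdiag2 e ** adj2 U) = U ** rdiag2 d ** (adj2 U ** U) ** rdiag2 e ** adj2 U"
    by (simp add: matrix_mul_assoc)
  thus ?thesis by (simp add: UU rdiag2_mult matrix_mul_assoc[symmetric])
qed

lemma conj_one:
  assumes "unitary2 U"
  shows "U ** rdiag2 (\<lambda>i. 1) ** adj2 U = mat 1"
proof -
  have "rdiag2 (\<lambda>i. 1) = mat 1" by (simp add: rdiag2_m2 mat1_m2)
  thus ?thesis using unitary2_right[OF assms] by simp
qed

lemma powr1_fun: "\<forall>i. d i > 0 \<Longrightarrow> (\<lambda>i. d i powr 1) = (d :: 'a \<Rightarrow> real)"
proof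
  fix x assume "\<forall>i. d i > 0"
  hence "d x > 0" by blast
  thus "d x powr 1 = d x" by (simp add: abs_of_pos)
qed

lemma unitary2_mat1: "unitary2 (mat 1)"
  by (simp add: unitary2_def mat1_m2)

definition pw1 :: "real \<Rightarrow> real \<Rightarrow> real \<Rightarrow> real \<Rightarrow> real" where
  "pw1 a b c r = ms (ev1 a b c) (ev2 a b c) r * a + mt (ev1 a b c) (ev2 a b c) r"
definition pw2 :: "real \<Rightarrow> real \<Rightarrow> real \<Rightarrow> real \<Rightarrow> real" where
  "pw2 a b c r = ms (ev1 a b c) (ev2 a b c) r * b"
definition pw3 :: "real \<Rightarrow> real \<Rightarrow> real \<Rightarrow> real \<Rightarrow> real" where
  "pw3 a b c r = ms (ev1 a b c) (ev2 a b c) r * c + mt (ev1 a b c) (ev2 a b c) r"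

lemma mpow_posc': "posc a b c \<Longrightarrow> mpow (m2 a b b c) r = m2 (pw1 a b c r) (pw2 a b c r) (pw2 a b c r) (pw3 a b c r)"
  using mpow_posc unfolding pw1_def pw2_def pw3_def by blast



lemma pos_powr_all: "\<forall>i. d i > 0 \<Longrightarrow> \<forall>i. (d i :: real) powr s > 0"
proof
  fix i assume "\<forall>i. d i > 0"
  hence "d i > 0" by blast
  thus "d i powr s > 0" by simp
qed

lemma posc_Y: "posc a b c \<Longrightarrow> k > 0 \<Longrightarrow> posc a (k * b) (k\<^sup>2 * c)"
  unfolding posc_def by (simp add: power_mult_distrib algebra_simps)

lemma chain:
  fixes \<alpha> p q k a b c :: real
  assumes abc: "posc a b c" and k: "k > 0" and al: "0 < \<alpha>" "\<alpha> < 1" and p: "p > 0" and q: "q > 0"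
  defines "X \<equiv> m2 a b b c" and "Y \<equiv> m2 a (k * b) (k * b) (k\<^sup>2 * c)"
  defines "A \<equiv> mpow X (1 / p)" and "B \<equiv> mpow Y (1 / p)"
  defines "s1 \<equiv> (1 - \<alpha>) * pw1 a b c (q / p) + \<alpha> * pw1 a (k * b) (k\<^sup>2 * c) (q / p)"
  defines "s2 \<equiv> (1 - \<alpha>) * pw2 a b c (q / p) + \<alpha> * pw2 a (k * b) (k\<^sup>2 * c) (q / p)"
  defines "s3 \<equiv> (1 - \<alpha>) * pw3 a b c (q / p) + \<alpha> * pw3 a (k * b) (k\<^sup>2 * c) (q / p)"
  shows "posdef2 A" "posdef2 B" "lam1 (SG \<alpha> p A B) \<ge> a powr (1 / p)"
    "lam1 (AM \<alpha> q A B) = ev1 s1 s2 s3 powr (1 / q)"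
proof -
  have Yp: "posc a (k * b) (k\<^sup>2 * c)" using posc_Y[OF abc k] .
  obtain UX where UX: "unitary2 UX" "X = UX ** rdiag2 (ED a b c) ** adj2 UX"
    using spec_posc X_def by blast
  obtain UY where UY: "unitary2 UY" "Y = UY ** rdiag2 (ED a (k * b) (k\<^sup>2 * c)) ** adj2 UY"
    using spec_posc Y_def by blast
  define dX where "dX = ED a b c"
  define dY where "dY = ED a (k * b) (k\<^sup>2 * c)"
  have dX: "\<forall>i. dX i > 0" using ED_pos[OF abc] dX_def by simp
  have dY: "\<forall>i. dY i > 0" using ED_pos[OF Yp] dY_def by simp
  have X1: "X = UX ** rdiag2 (\<lambda>i. dX i powr 1) ** adj2 UX" using UX dX powr1_fun[OF dX] dX_def by simp
  have Y1: "Y = UY ** rdiag2 (\<lambda>i. dY i powr 1) ** adj2 UY" using UY dY powr1_fun[OF dY] dY_def by simp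
  have Xs: "mpow X s = UX ** rdiag2 (\<lambda>i. dX i powr s) ** adj2 UX" for s
    using conj_powr[OF UX(1) dX, of 1 s] X1 by simp
  have Ys: "mpow Y s = UY ** rdiag2 (\<lambda>i. dY i powr s) ** adj2 UY" for s
    using conj_powr[OF UY(1) dY, of 1 s] Y1 by simp
  have As: "mpow A s = UX ** rdiag2 (\<lambda>i. dX i powr (s / p)) ** adj2 UX" for s
    using conj_powr[OF UX(1) dX, of "1/p" s] unfolding A_def Xs by simp
  have Bs: "mpow B s = UY ** rdiag2 (\<lambda>i. dY i powr (s / p)) ** adj2 UY" for s
    using conj_powr[OF UY(1) dY, of "1/p" s] unfolding B_def Ys by simp
  have Ap: "mpow A p = X" using As[of p] p X1 by simp
  have Bp: "mpow B p = Y" using Bs[of p] p Y1 by simp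
  have dXnz: "\<forall>i. dX i \<noteq> 0" using dX by (metis less_irrefl)
  have dXs: "\<forall>i. dX i powr s > 0" for s using pos_powr_all[OF dX] .
  have dYs: "\<forall>i. dY i powr s > 0" for s using pos_powr_all[OF dY] .
  show "posdef2 A" unfolding A_def Xs by (rule posdef_conj[OF UX(1) dXs])
  show "posdef2 B" unfolding B_def Ys by (rule posdef_conj[OF UY(1) dYs])
  have Aq: "mpow A q = m2 (pw1 a b c (q / p)) (pw2 a b c (q / p)) (pw2 a b c (q / p)) (pw3 a b c (q / p))"
    using As[of q] Xs[of "q / p"] mpow_posc'[OF abc, of "q / p"] X_def by simp
  have Bq: "mpow B q = m2 (pw1 a (k * b) (k\<^sup>2 * c) (q / p)) (pw2 a (k * b) (k\<^sup>2 * c) (q / p))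
       (pw2 a (k * b) (k\<^sup>2 * c) (q / p)) (pw3 a (k * b) (k\<^sup>2 * c) (q / p))"
    using Bs[of q] Ys[of "q / p"] mpow_posc'[OF Yp, of "q / p"] Y_def by simp
  have pA: "posc (pw1 a b c (q / p)) (pw2 a b c (q / p)) (pw3 a b c (q / p))"
    using posdef2_posc posdef_conj[OF UX(1) dXs] As[of q] Aq by metis
  have pB: "posc (pw1 a (k * b) (k\<^sup>2 * c) (q / p)) (pw2 a (k * b) (k\<^sup>2 * c) (q / p)) (pw3 a (k * b) (k\<^sup>2 * c) (q / p))"
    using posdef2_posc posdef_conj[OF UY(1) dYs] Bs[of q] Bq by metis
  have pS: "posc s1 s2 s3" unfolding s1_def s2_def s3_def
    using posc_comb[OF pA pB] al by simp
  have S: "(1 - \<alpha>) *\<^sub>R mpow A q + \<alpha> *\<^sub>R mpow B q = m2 s1 s2 s2 s3"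
    unfolding Aq Bq s1_def s2_def s3_def by simp
  show "lam1 (AM \<alpha> q A B) = ev1 s1 s2 s3 powr (1 / q)"
    unfolding AM_def S using lam1_mpow_posc[OF pS] q by simp
  define H where "H = UX ** rdiag2 (\<lambda>i. dX i powr (1/2)) ** adj2 UX"
  define K where "K = UX ** rdiag2 (\<lambda>i. dX i powr (-1/2)) ** adj2 UX"
  have Xi: "mpow X (-1) = UX ** rdiag2 (\<lambda>i. dX i powr (-1)) ** adj2 UX" by (rule Xs)
  have XiH: "mpow (mpow X (-1)) (-1/2) = H"
    unfolding Xi H_def using conj_powr[OF UX(1) dX, of "-1" "-1/2"] by simp
  have XiK: "mpow (mpow X (-1)) (1/2) = K"
    unfolding Xi K_def using conj_powr[OF UX(1) dX, of "-1" "1/2"] by simp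
  have KH: "K ** H = mat 1"
  proof -
    have "K ** H = UX ** rdiag2 (\<lambda>i. dX i powr (-1/2) * dX i powr (1/2)) ** adj2 UX"
      unfolding K_def H_def by (rule conj_mult[OF UX(1)])
    also have "(\<lambda>i. dX i powr (-1/2) * dX i powr (1/2)) = (\<lambda>i. 1)"
      using dX dXnz by (auto simp: fun_eq_iff powr_add[symmetric])
    finally show ?thesis using conj_one[OF UX(1)] by simp
  qed
  have HK: "H ** K = mat 1"
  proof -
    have "H ** K = UX ** rdiag2 (\<lambda>i. dX i powr (1/2) * dX i powr (-1/2)) ** adj2 UX"
      unfolding K_def H_def by (rule conj_mult[OF UX(1)])
    also have "(\<lambda>i. dX i powr (1/2) * dX i powr (-1/2)) = (\<lambda>i. 1)"
      using dX dXnz by (auto simp: fun_eq_iff powr_add[symmetric])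
    finally show ?thesis using conj_one[OF UX(1)] by simp
  qed
  have HH: "H ** H = X"
  proof -
    have "H ** H = UX ** rdiag2 (\<lambda>i. dX i powr (1/2) * dX i powr (1/2)) ** adj2 UX"
      unfolding H_def by (rule conj_mult[OF UX(1)])
    also have "(\<lambda>i. dX i powr (1/2) * dX i powr (1/2)) = (\<lambda>i. dX i powr 1)"
      using dX dXnz by (auto simp: fun_eq_iff powr_add[symmetric])
    finally show ?thesis using X1 by simp
  qed
  define h1 where "h1 = pw1 a b c (1/2)"
  define h2 where "h2 = pw2 a b c (1/2)"
  define h3 where "h3 = pw3 a b c (1/2)"
  have Hm: "H = m2 h1 h2 h2 h3"
    using Xs[of "1/2"] mpow_posc'[OF abc, of "1/2"] X_def H_def h1_def h2_def h3_def by simp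
  have detH: "h1 * h3 - h2 * h2 > 0"
  proof -
    have "det H = of_real (dX 1 powr (1/2) * dX 2 powr (1/2))"
      unfolding H_def by (rule det_conj[OF UX(1)])
    moreover have "det H = of_real (h1 * h3 - h2 * h2)" unfolding Hm det_m2 ..
    ultimately have "h1 * h3 - h2 * h2 = dX 1 powr (1/2) * dX 2 powr (1/2)" by (metis of_real_eq_iff)
    thus ?thesis using dXs by simp
  qed
  define C0 where "C0 = m2 1 0 0 k"
  have YC: "Y = C0 ** X ** C0" unfolding C0_def X_def Y_def by (simp add: power2_eq_square m2_eq_iff mult_ac)
  define P where "P = H ** C0 ** H"
  define p1 where "p1 = h1 * h1 + k * h2 * h2"
  define p2 where "p2 = h1 * h2 + k * h2 * h3"
  define p3 where "p3 = h2 * h2 + k * h3 * h3"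
  have Pm: "P = m2 p1 p2 p2 p3" unfolding P_def Hm C0_def p1_def p2_def p3_def
    by (simp add: algebra_simps)
  have pP: "posc p1 p2 p3"
  proof -
    have "h1 \<noteq> 0" using detH by (auto simp: zero_less_mult_iff)
    hence "h1 * h1 > 0" by (cases "h1 > 0") (auto simp: mult_neg_neg)
    moreover have "k * h2 * h2 \<ge> 0" using k by (simp add: mult.assoc)
    ultimately have p1: "p1 > 0" unfolding p1_def by linarith
    have "p1 * p3 - p2\<^sup>2 = k * (h1 * h3 - h2 * h2)\<^sup>2"
      unfolding p1_def p2_def p3_def by (simp add: power2_eq_square algebra_simps)
    also have "\<dots> > 0" using k detH by simp
    finally show ?thesis using p1 by (simp add: posc_def)
  qed
  have sqP: "mpow (P ** P) (1/2) = P"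
  proof -
    obtain UP where UP: "unitary2 UP" "P = UP ** rdiag2 (ED p1 p2 p3) ** adj2 UP"
      using spec_posc Pm by blast
    have e: "\<forall>i. ED p1 p2 p3 i > 0" using ED_pos[OF pP] .
    have PP: "P ** P = UP ** rdiag2 (\<lambda>i. ED p1 p2 p3 i * ED p1 p2 p3 i) ** adj2 UP"
      using conj_mult[OF UP(1)] UP(2) by metis
    have e2: "\<forall>i. ED p1 p2 p3 i * ED p1 p2 p3 i > 0" using e by simp
    have "mpow (P ** P) (1/2) = UP ** rdiag2 (\<lambda>i. (ED p1 p2 p3 i * ED p1 p2 p3 i) powr (1/2)) ** adj2 UP"
      by (rule mpow_eq[OF UP(1) e2 PP])
    also have "(\<lambda>i. (ED p1 p2 p3 i * ED p1 p2 p3 i) powr (1/2)) = ED p1 p2 p3"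
      using e by (auto simp: fun_eq_iff powr_half_sqrt less_imp_le)
    finally show ?thesis using UP(2) by simp
  qed
  have inner: "mpow (mpow X (-1)) (-1/2) ** Y ** mpow (mpow X (-1)) (-1/2) = P ** P"
  proof -
    have "mpow (mpow X (-1)) (-1/2) ** Y ** mpow (mpow X (-1)) (-1/2) = H ** (C0 ** X ** C0) ** H"
      by (simp only: XiH YC)
    also have "\<dots> = P ** P" unfolding P_def HH[symmetric] by (simp add: matrix_mul_assoc)
    finally show ?thesis .
  qed
  have G: "gmean (mpow X (-1)) Y = C0"
  proof -
    have "gmean (mpow X (-1)) Y = K ** P ** K"
      unfolding gmean_def inner sqP XiK ..
    also have "\<dots> = (K ** H) ** C0 ** (H ** K)" unfolding P_def by (simp add: matrix_mul_assoc)
    finally show ?thesis using KH HK by simp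
  qed
  have C0a: "mpow C0 \<alpha> = m2 1 0 0 (k powr \<alpha>)"
  proof -
    have c1: "C0 = mat 1 ** rdiag2 (\<lambda>i. if i = 1 then 1 else k) ** adj2 (mat 1)"
      by (simp add: C0_def mat1_m2 rdiag2_m2)
    have c2: "\<forall>i. (if i = 1 then 1 else k) > (0::real)" using k by simp
    have "mpow C0 \<alpha> = mat 1 ** rdiag2 (\<lambda>i. (if i = 1 then 1 else k) powr \<alpha>) ** adj2 (mat 1)"
      by (rule mpow_eq[OF unitary2_mat1 c2 c1])
    thus ?thesis by (simp add: mat1_m2 rdiag2_m2)
  qed
  define ka where "ka = k powr \<alpha>"
  have F: "Falpha \<alpha> X Y = m2 a (ka * b) (ka * b) (ka\<^sup>2 * c)"
    unfolding Falpha_def G C0a unfolding X_def ka_def by (simp add: power2_eq_square m2_eq_iff mult_ac)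
  have pF: "posc a (ka * b) (ka\<^sup>2 * c)" using posc_Y[OF abc] k ka_def by simp
  have "lam1 (SG \<alpha> p A B) = ev1 a (ka * b) (ka\<^sup>2 * c) powr (1 / p)"
    unfolding SG_def Ap Bp F using lam1_mpow_posc[OF pF] p by simp
  also have "\<dots> \<ge> a powr (1 / p)"
    using ev1_ge[of a "ka * b" "ka\<^sup>2 * c"] p abc by (intro powr_mono2) (auto simp: posc_def)
  finally show "lam1 (SG \<alpha> p A B) \<ge> a powr (1 / p)" .
qed



lemma tendsto_ev:
  assumes "(a \<longlongrightarrow> a0) F" "(b \<longlongrightarrow> b0) F" "(c \<longlongrightarrow> c0) F"
  shows "((\<lambda>t. ev1 (a t) (b t) (c t)) \<longlongrightarrow> ev1 a0 b0 c0) F"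
    "((\<lambda>t. ev2 (a t) (b t) (c t)) \<longlongrightarrow> ev2 a0 b0 c0) F"
  unfolding ev1_def ev2_def using assms by (auto intro!: tendsto_intros)

lemma tendsto_msmt:
  fixes f g :: "'a \<Rightarrow> real"
  assumes f: "(f \<longlongrightarrow> L1) F" and g: "(g \<longlongrightarrow> L2) F" and ne: "L1 \<noteq> L2"
    and ev: "eventually (\<lambda>t. f t \<ge> 0 \<and> g t \<ge> 0) F" and r: "r > 0"
  shows "((\<lambda>t. ms (f t) (g t) r) \<longlongrightarrow> ms L1 L2 r) F"
    "((\<lambda>t. mt (f t) (g t) r) \<longlongrightarrow> mt L1 L2 r) F"
proof -
  have "((\<lambda>t. f t - g t) \<longlongrightarrow> L1 - L2) F" using f g by (intro tendsto_intros)
  hence evne: "eventually (\<lambda>t. f t - g t \<noteq> 0) F"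
    using ne by (intro tendsto_imp_eventually_ne) auto
  have fr: "((\<lambda>t. f t powr r) \<longlongrightarrow> L1 powr r) F"
    using ev r by (intro tendsto_powr'[OF f tendsto_const]) (auto elim: eventually_mono)
  have gr: "((\<lambda>t. g t powr r) \<longlongrightarrow> L2 powr r) F"
    using ev r by (intro tendsto_powr'[OF g tendsto_const]) (auto elim: eventually_mono)
  have nz: "L1 - L2 \<noteq> 0" using ne by simp
  have "((\<lambda>t. (f t powr r - g t powr r) / (f t - g t)) \<longlongrightarrow> (L1 powr r - L2 powr r) / (L1 - L2)) F"
    by (rule tendsto_divide[OF tendsto_diff[OF fr gr] tendsto_diff[OF f g] nz])
  moreover have "eventually (\<lambda>t. ms (f t) (g t) r = (f t powr r - g t powr r) / (f t - g t)) F"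
    using evne by eventually_elim (simp add: ms_def)
  ultimately show "((\<lambda>t. ms (f t) (g t) r) \<longlongrightarrow> ms L1 L2 r) F"
    using ne by (simp add: ms_def tendsto_cong)
  have "((\<lambda>t. (f t * g t powr r - g t * f t powr r) / (f t - g t)) \<longlongrightarrow> (L1 * L2 powr r - L2 * L1 powr r) / (L1 - L2)) F"
    by (rule tendsto_divide[OF tendsto_diff[OF tendsto_mult[OF f gr] tendsto_mult[OF g fr]] tendsto_diff[OF f g] nz])
  moreover have "eventually (\<lambda>t. mt (f t) (g t) r = (f t * g t powr r - g t * f t powr r) / (f t - g t)) F"
    using evne by eventually_elim (simp add: mt_def)
  ultimately show "((\<lambda>t. mt (f t) (g t) r) \<longlongrightarrow> mt L1 L2 r) F"
    using ne by (simp add: mt_def tendsto_cong)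
qed

lemma tendsto_pw:
  assumes a: "(a \<longlongrightarrow> a0) F" and b: "(b \<longlongrightarrow> b0) F" and c: "(c \<longlongrightarrow> c0) F"
    and ne: "ev1 a0 b0 c0 \<noteq> ev2 a0 b0 c0"
    and ev: "eventually (\<lambda>t. posc (a t) (b t) (c t)) F" and r: "r > 0"
  shows "((\<lambda>t. pw1 (a t) (b t) (c t) r) \<longlongrightarrow> pw1 a0 b0 c0 r) F"
    "((\<lambda>t. pw2 (a t) (b t) (c t) r) \<longlongrightarrow> pw2 a0 b0 c0 r) F"
    "((\<lambda>t. pw3 (a t) (b t) (c t) r) \<longlongrightarrow> pw3 a0 b0 c0 r) F"
proof -
  have ev': "eventually (\<lambda>t. ev1 (a t) (b t) (c t) \<ge> 0 \<and> ev2 (a t) (b t) (c t) \<ge> 0) F"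
    using ev
  proof eventually_elim
    case (elim t)
    thus ?case using ev2_pos[of "a t" "b t" "c t"] ev12_le[of "a t" "b t" "c t"]
      by (auto simp: posc_def)
  qed
  note E = tendsto_ev[OF a b c]
  note M = tendsto_msmt[OF E ne ev' r]
  show "((\<lambda>t. pw1 (a t) (b t) (c t) r) \<longlongrightarrow> pw1 a0 b0 c0 r) F"
    unfolding pw1_def by (intro tendsto_intros M a)
  show "((\<lambda>t. pw2 (a t) (b t) (c t) r) \<longlongrightarrow> pw2 a0 b0 c0 r) F"
    unfolding pw2_def by (intro tendsto_intros M b)
  show "((\<lambda>t. pw3 (a t) (b t) (c t) r) \<longlongrightarrow> pw3 a0 b0 c0 r) F"
    unfolding pw3_def by (intro tendsto_intros M c)
qed

lemma ev_rank1:
  assumes "0 < z" "z < 1"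
  shows "ev1 z (sqrt (z * (1 - z))) (1 - z) = 1" "ev2 z (sqrt (z * (1 - z))) (1 - z) = 0"
proof -
  have "((z - (1 - z)) / 2)\<^sup>2 + (sqrt (z * (1 - z)))\<^sup>2 = (1/2)\<^sup>2"
    using assms by (simp add: power2_eq_square field_simps)
  hence "sqrt (((z - (1 - z)) / 2)\<^sup>2 + (sqrt (z * (1 - z)))\<^sup>2) = sqrt ((1/2)\<^sup>2)"
    by (rule arg_cong)
  hence "sqrt (((z - (1 - z)) / 2)\<^sup>2 + (sqrt (z * (1 - z)))\<^sup>2) = 1/2" by simp
  thus "ev1 z (sqrt (z * (1 - z))) (1 - z) = 1" "ev2 z (sqrt (z * (1 - z))) (1 - z) = 0"
    unfolding ev1_def ev2_def by simp_all
qed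

lemma ev_diag:
  assumes "0 < z"
  shows "ev1 z 0 0 = z" "ev2 z 0 0 = 0"
  using assms by (simp_all add: ev1_def ev2_def)

lemma pw_rank1:
  assumes "0 < z" "z < 1" "r > 0"
  shows "pw1 z (sqrt (z * (1 - z))) (1 - z) r = z"
    "pw2 z (sqrt (z * (1 - z))) (1 - z) r = sqrt (z * (1 - z))"
    "pw3 z (sqrt (z * (1 - z))) (1 - z) r = 1 - z"
  using assms ev_rank1[OF assms(1,2)] by (simp_all add: pw1_def pw2_def pw3_def ms_def mt_def)

lemma pw_diag:
  assumes "0 < z" "r > 0"
  shows "pw1 z 0 0 r = z powr r" "pw2 z 0 0 r = 0" "pw3 z 0 0 r = 0"
  using assms ev_diag[OF assms(1)] by (simp_all add: pw1_def pw2_def pw3_def ms_def mt_def)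

lemma ev1_lt:
  assumes "g > s11" "g > s22" "(g - s11) * (g - s22) > s12\<^sup>2"
  shows "ev1 s11 s12 s22 < g"
proof -
  define R where "R = g - (s11 + s22) / 2"
  have R: "R > 0" using assms(1,2) unfolding R_def by (simp add: field_simps)
  have "R\<^sup>2 - ((s11 - s22) / 2)\<^sup>2 = (g - s11) * (g - s22)"
    unfolding R_def by (simp add: power2_eq_square field_simps)
  hence "((s11 - s22) / 2)\<^sup>2 + s12\<^sup>2 < R\<^sup>2" using assms(3) by simp
  hence "sqrt (((s11 - s22) / 2)\<^sup>2 + s12\<^sup>2) < sqrt (R\<^sup>2)" by (simp only: real_sqrt_less_iff)
  also have "\<dots> = R" using R by simp
  finally have "sqrt (((s11 - s22) / 2)\<^sup>2 + s12\<^sup>2) < R" .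
  hence "2 * ev1 s11 s12 s22 < 2 * g" unfolding ev1_def R_def by (simp add: field_simps)
  thus ?thesis by simp
qed

lemma final_ineq:
  fixes w r :: real
  assumes w: "0 < w" "w < 1" and r: "0 < r" "r < 1 - w"
  defines "u \<equiv> (1 - w - r) / 2"
  defines "z \<equiv> 1 - u"
  shows "ev1 (w * z + (1 - w) * z powr r) (w * sqrt (z * (1 - z))) (w * (1 - z)) < z powr r"
proof -
  define g where "g = z powr r"
  define m where "m = sqrt (z * (1 - z))"
  have u2: "2 * u = 1 - w - r" unfolding u_def by simp
  have u: "0 < u" "2 * u < 1 - w" "r = 1 - w - 2 * u" using r w u2 by linarith+
  have z: "z = 1 - u" "0 < z" using u w unfolding z_def by auto
  have m2: "m\<^sup>2 = z * u" unfolding m_def using z u by simp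
  have "ln (1 / z) \<le> 1 / z - 1" using z by (intro ln_le_minus_one) simp
  moreover have "ln (1 / z) = - ln z" using z by (simp add: ln_div)
  moreover have "1 / z - 1 = u / z" using z by (simp add: field_simps)
  ultimately have lnz: "ln z \<ge> - (u / z)" by linarith
  have g: "g = exp (r * ln z)" unfolding g_def powr_def using z by simp
  have "1 + r * ln z \<le> g" unfolding g by simp
  moreover have "r * ln z \<ge> r * (- (u / z))" using lnz r by (intro mult_left_mono) auto
  ultimately have gG: "g \<ge> 1 - r * (u / z)" by linarith
  have e1: "1 - r * (u / z) - z = (z * (1 - z) - r * u) / z" using z by (simp add: field_simps)
  have e2: "z * (1 - z) - r * u = u * (w + u)" unfolding z(1) u(3) by (simp add: algebra_simps)
  have "1 - r * (u / z) - z = u * (w + u) / z" unfolding e1 e2 ..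
  hence gz: "g - z \<ge> u * (w + u) / z" using gG by linarith
  have A: "u * (w + u) / z > 0" using u w z by simp
  have zwu: "z - w * u > 0"
  proof -
    have "w * u < u" using w u by simp
    thus ?thesis using z u w by linarith
  qed
  have gwu: "g - w * u \<ge> z - w * u" using gz A by linarith
  have prod: "(g - z) * (g - w * u) \<ge> (u * (w + u) / z) * (z - w * u)"
    using gz gwu A zwu by (intro mult_mono) auto
  have poly: "1 + w - w * w - u * (1 + 2 * w) > 0"
  proof -
    have "u * (1 + 2 * w) < ((1 - w) / 2) * (1 + 2 * w)"
      using u w by (intro mult_strict_right_mono) auto
    moreover have "((1 - w) / 2) * (1 + 2 * w) = (1 + w - 2 * (w * w)) / 2" by (simp add: field_simps)
    ultimately show ?thesis using w by (simp add: field_simps)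
  qed
  have key: "(u * (w + u) / z) * (z - w * u) > w * z * u"
  proof -
    have "(w + u) * (z - w * u) - w * z * z = u * (1 + w - w * w - u * (1 + 2 * w))"
      unfolding z(1) by (simp add: algebra_simps)
    also have "\<dots> > 0" using u poly by simp
    finally have "(w + u) * (z - w * u) > w * z * z" by simp
    hence "u * ((w + u) * (z - w * u)) > u * (w * z * z)" using u by simp
    hence lt: "(u * ((w + u) * (z - w * u))) / z > (u * (w * z * z)) / z"
      using z(2) by (rule divide_strict_right_mono)
    have eq1: "(u * (w + u) / z) * (z - w * u) = (u * ((w + u) * (z - w * u))) / z" by simp
    have eq2: "(u * (w * z * z)) / z = w * z * u" using z(2) by simp
    show ?thesis using lt unfolding eq1 eq2 .
  qed
  have main: "(g - (w * z + (1 - w) * g)) * (g - w * (1 - z)) > (w * m)\<^sup>2"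
  proof -
    have "(g - (w * z + (1 - w) * g)) * (g - w * (1 - z)) = w * ((g - z) * (g - w * u))"
      unfolding z(1) by (simp add: algebra_simps)
    also have "\<dots> > w * (w * z * u)" using prod key w by (intro mult_strict_left_mono) auto
    also have "w * (w * z * u) = (w * m)\<^sup>2" using m2 by (simp add: power_mult_distrib power2_eq_square)
    finally show ?thesis .
  qed
  have gs11: "g > w * z + (1 - w) * g"
  proof -
    have "g - (w * z + (1 - w) * g) = w * (g - z)" by (simp add: algebra_simps)
    also have "\<dots> > 0" using gz A w by simp
    finally show ?thesis by simp
  qed
  have gs22: "g > w * (1 - z)" using gwu zwu z by simp
  show ?thesis using ev1_lt[OF gs11 gs22 main] unfolding g_def m_def .
qed



lemma limit_step:
  fixes a1 b1 c1 a2 b2 c2 f :: "real \<Rightarrow> real"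
  assumes t1: "(a1 \<longlongrightarrow> A1) F" "(b1 \<longlongrightarrow> B1) F" "(c1 \<longlongrightarrow> C1) F"
    and t2: "(a2 \<longlongrightarrow> A2) F" "(b2 \<longlongrightarrow> B2) F" "(c2 \<longlongrightarrow> C2) F"
    and ne1: "ev1 A1 B1 C1 \<noteq> ev2 A1 B1 C1" and ne2: "ev1 A2 B2 C2 \<noteq> ev2 A2 B2 C2"
    and ev1p: "eventually (\<lambda>t. posc (a1 t) (b1 t) (c1 t)) F"
    and ev2p: "eventually (\<lambda>t. posc (a2 t) (b2 t) (c2 t)) F"
    and r: "r > 0" and F: "F \<noteq> bot"
    and f: "(f \<longlongrightarrow> f0) F"
    and pos: "ev1 ((1 - \<alpha>) * pw1 A1 B1 C1 r + \<alpha> * pw1 A2 B2 C2 r)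
                   ((1 - \<alpha>) * pw2 A1 B1 C1 r + \<alpha> * pw2 A2 B2 C2 r)
                   ((1 - \<alpha>) * pw3 A1 B1 C1 r + \<alpha> * pw3 A2 B2 C2 r) \<noteq> 0"
    and ineq: "eventually (\<lambda>t. f t powr e1 \<le>
       ev1 ((1 - \<alpha>) * pw1 (a1 t) (b1 t) (c1 t) r + \<alpha> * pw1 (a2 t) (b2 t) (c2 t) r)
           ((1 - \<alpha>) * pw2 (a1 t) (b1 t) (c1 t) r + \<alpha> * pw2 (a2 t) (b2 t) (c2 t) r)
           ((1 - \<alpha>) * pw3 (a1 t) (b1 t) (c1 t) r + \<alpha> * pw3 (a2 t) (b2 t) (c2 t) r) powr e2) F"
    and f0: "f0 \<noteq> 0"
  shows "f0 powr e1 \<le>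
       ev1 ((1 - \<alpha>) * pw1 A1 B1 C1 r + \<alpha> * pw1 A2 B2 C2 r)
           ((1 - \<alpha>) * pw2 A1 B1 C1 r + \<alpha> * pw2 A2 B2 C2 r)
           ((1 - \<alpha>) * pw3 A1 B1 C1 r + \<alpha> * pw3 A2 B2 C2 r) powr e2"
proof -
  note P1 = tendsto_pw[OF t1 ne1 ev1p r]
  note P2 = tendsto_pw[OF t2 ne2 ev2p r]
  have S1: "((\<lambda>t. (1 - \<alpha>) * pw1 (a1 t) (b1 t) (c1 t) r + \<alpha> * pw1 (a2 t) (b2 t) (c2 t) r) \<longlongrightarrow>
      (1 - \<alpha>) * pw1 A1 B1 C1 r + \<alpha> * pw1 A2 B2 C2 r) F"
    by (intro tendsto_intros P1 P2)
  have S2: "((\<lambda>t. (1 - \<alpha>) * pw2 (a1 t) (b1 t) (c1 t) r + \<alpha> * pw2 (a2 t) (b2 t) (c2 t) r) \<longlongrightarrow>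
      (1 - \<alpha>) * pw2 A1 B1 C1 r + \<alpha> * pw2 A2 B2 C2 r) F"
    by (intro tendsto_intros P1 P2)
  have S3: "((\<lambda>t. (1 - \<alpha>) * pw3 (a1 t) (b1 t) (c1 t) r + \<alpha> * pw3 (a2 t) (b2 t) (c2 t) r) \<longlongrightarrow>
      (1 - \<alpha>) * pw3 A1 B1 C1 r + \<alpha> * pw3 A2 B2 C2 r) F"
    by (intro tendsto_intros P1 P2)
  note E = tendsto_ev(1)[OF S1 S2 S3]
  have R: "((\<lambda>t. ev1 ((1 - \<alpha>) * pw1 (a1 t) (b1 t) (c1 t) r + \<alpha> * pw1 (a2 t) (b2 t) (c2 t) r)
           ((1 - \<alpha>) * pw2 (a1 t) (b1 t) (c1 t) r + \<alpha> * pw2 (a2 t) (b2 t) (c2 t) r)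
           ((1 - \<alpha>) * pw3 (a1 t) (b1 t) (c1 t) r + \<alpha> * pw3 (a2 t) (b2 t) (c2 t) r) powr e2) \<longlongrightarrow>
     ev1 ((1 - \<alpha>) * pw1 A1 B1 C1 r + \<alpha> * pw1 A2 B2 C2 r)
           ((1 - \<alpha>) * pw2 A1 B1 C1 r + \<alpha> * pw2 A2 B2 C2 r)
           ((1 - \<alpha>) * pw3 A1 B1 C1 r + \<alpha> * pw3 A2 B2 C2 r) powr e2) F"
    by (rule tendsto_powr[OF E tendsto_const pos])
  have L: "((\<lambda>t. f t powr e1) \<longlongrightarrow> f0 powr e1) F"
    by (rule tendsto_powr[OF f tendsto_const f0])
  show ?thesis using F by (intro tendsto_le[OF _ R L ineq]) simp
qed

lemma setup_z:
  fixes w r :: real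
  assumes w: "0 < w" "w < 1" and r: "0 < r" "r < 1 - w"
  defines "u \<equiv> (1 - w - r) / 2"
  defines "z \<equiv> 1 - u"
  shows "0 < z" "z < 1"
proof -
  have "2 * u = 1 - w - r" unfolding u_def by simp
  hence "0 < u" "u < 1" using w r by linarith+
  thus "0 < z" "z < 1" unfolding z_def by linarith+
qed

lemma posc_family:
  assumes z: "0 < z" "z < 1" and t: "0 < t"
  shows "posc (z + (1 - z) * t) (sqrt (z * (1 - z)) * (1 - t)) ((1 - z) + z * t)"
proof -
  have m2: "(sqrt (z * (1 - z)))\<^sup>2 = z * (1 - z)" using z by simp
  have "(z + (1 - z) * t) * ((1 - z) + z * t) - (sqrt (z * (1 - z)) * (1 - t))\<^sup>2 = t"
    unfolding power_mult_distrib m2 by (simp add: algebra_simps power2_eq_square)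
  moreover have "z + (1 - z) * t > 0" using z t by (simp add: add_pos_nonneg)
  ultimately show ?thesis using t by (simp add: posc_def)
qed

lemma ev_at_right01: "eventually (\<lambda>t. 0 < t \<and> t < 1) (at_right (0::real))"
  unfolding eventually_at_right_field by (intro exI[of _ 1]) auto

lemma contra_final:
  fixes w r p q z m :: real
  assumes w: "0 < w" "w < 1" and r: "0 < r" "r < 1 - w" and p: "p > 0" and q: "q > 0" and rq: "r = q / p"
  defines "u \<equiv> (1 - w - r) / 2"
  defines "z \<equiv> 1 - u"
  assumes le: "z powr (1 / p) \<le> ev1 (w * z + (1 - w) * z powr r) (w * sqrt (z * (1 - z))) (w * (1 - z)) powr (1 / q)"
  shows False
proof -
  have z: "0 < z" "z < 1" using setup_z[OF w r] unfolding z_def u_def by auto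
  have lt: "ev1 (w * z + (1 - w) * z powr r) (w * sqrt (z * (1 - z))) (w * (1 - z)) < z powr r"
    using final_ineq[OF w r] unfolding z_def u_def .
  have "ev1 (w * z + (1 - w) * z powr r) (w * sqrt (z * (1 - z))) (w * (1 - z)) \<ge> w * z + (1 - w) * z powr r"
    using ev1_ge by blast
  moreover have "w * z + (1 - w) * z powr r > 0" using w z by (simp add: add_pos_nonneg)
  ultimately have "ev1 (w * z + (1 - w) * z powr r) (w * sqrt (z * (1 - z))) (w * (1 - z)) powr (1 / q)
      < (z powr r) powr (1 / q)"
    using lt q by (intro powr_less_mono2) auto
  also have "(z powr r) powr (1 / q) = z powr (1 / p)" using rq p q by (simp add: powr_powr)
  finally show False using le by simp
qed

lemma case1:
  fixes \<alpha> p q :: real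
  assumes al: "0 < \<alpha>" "\<alpha> < 1" and p: "p > 0" and q: "q > 0"
    and H: "\<forall>A B. posdef2 A \<longrightarrow> posdef2 B \<longrightarrow> lam1 (SG \<alpha> p A B) \<le> lam1 (AM \<alpha> q A B)"
  shows "q / p \<ge> \<alpha>"
proof (rule ccontr)
  assume "\<not> q / p \<ge> \<alpha>"
  define r where "r = q / p"
  have r: "0 < r" "r < 1 - (1 - \<alpha>)" using \<open>\<not> q / p \<ge> \<alpha>\<close> p q unfolding r_def by auto
  have w: "0 < 1 - \<alpha>" "1 - \<alpha> < 1" using al by auto
  define u where "u = (1 - (1 - \<alpha>) - r) / 2"
  define z where "z = 1 - u"
  have z: "0 < z" "z < 1" using setup_z[OF w r] unfolding z_def u_def by auto
  define m where "m = sqrt (z * (1 - z))"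
  define a1 where "a1 = (\<lambda>t::real. z + (1 - z) * t)"
  define b1 where "b1 = (\<lambda>t::real. m * (1 - t))"
  define c1 where "c1 = (\<lambda>t::real. (1 - z) + z * t)"
  have pc: "posc (a1 t) (b1 t) (c1 t)" if "0 < t" for t
    using posc_family[OF z that] unfolding a1_def b1_def c1_def m_def .
  have ineq: "a1 t powr (1 / p) \<le>
       ev1 ((1 - \<alpha>) * pw1 (a1 t) (b1 t) (c1 t) r + \<alpha> * pw1 (a1 t) (t * b1 t) (t\<^sup>2 * c1 t) r)
           ((1 - \<alpha>) * pw2 (a1 t) (b1 t) (c1 t) r + \<alpha> * pw2 (a1 t) (t * b1 t) (t\<^sup>2 * c1 t) r)
           ((1 - \<alpha>) * pw3 (a1 t) (b1 t) (c1 t) r + \<alpha> * pw3 (a1 t) (t * b1 t) (t\<^sup>2 * c1 t) r) powr (1 / q)"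
    if t: "0 < t" for t
  proof -
    note C = chain[OF pc[OF t] t al p q]
    have "a1 t powr (1 / p) \<le> lam1 (SG \<alpha> p (mpow (m2 (a1 t) (b1 t) (b1 t) (c1 t)) (1 / p))
          (mpow (m2 (a1 t) (t * b1 t) (t * b1 t) (t\<^sup>2 * c1 t)) (1 / p)))" using C(3) .
    also have "\<dots> \<le> lam1 (AM \<alpha> q (mpow (m2 (a1 t) (b1 t) (b1 t) (c1 t)) (1 / p))
          (mpow (m2 (a1 t) (t * b1 t) (t * b1 t) (t\<^sup>2 * c1 t)) (1 / p)))"
      using H C(1,2) by blast
    finally show ?thesis unfolding C(4) r_def .
  qed
  have lim: "(a1 \<longlongrightarrow> z) (at_right 0)" "(b1 \<longlongrightarrow> m) (at_right 0)" "(c1 \<longlongrightarrow> 1 - z) (at_right 0)"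
     "((\<lambda>t. t * b1 t) \<longlongrightarrow> 0) (at_right 0)" "((\<lambda>t. t\<^sup>2 * c1 t) \<longlongrightarrow> 0) (at_right 0)"
    unfolding a1_def b1_def c1_def by (auto intro!: tendsto_eq_intros)
  have ne1: "ev1 z m (1 - z) \<noteq> ev2 z m (1 - z)" using ev_rank1[OF z] m_def by simp
  have ne2: "ev1 z 0 0 \<noteq> ev2 z 0 0" using ev_diag[of z] z by simp
  have evp1: "eventually (\<lambda>t. posc (a1 t) (b1 t) (c1 t)) (at_right 0)"
    using ev_at_right01 by eventually_elim (use pc in auto)
  have evp2: "eventually (\<lambda>t. posc (a1 t) (t * b1 t) (t\<^sup>2 * c1 t)) (at_right 0)"
    using ev_at_right01 by eventually_elim (use pc posc_Y in auto)
  have evi: "eventually (\<lambda>t. a1 t powr (1 / p) \<le>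
       ev1 ((1 - \<alpha>) * pw1 (a1 t) (b1 t) (c1 t) r + \<alpha> * pw1 (a1 t) (t * b1 t) (t\<^sup>2 * c1 t) r)
           ((1 - \<alpha>) * pw2 (a1 t) (b1 t) (c1 t) r + \<alpha> * pw2 (a1 t) (t * b1 t) (t\<^sup>2 * c1 t) r)
           ((1 - \<alpha>) * pw3 (a1 t) (b1 t) (c1 t) r + \<alpha> * pw3 (a1 t) (t * b1 t) (t\<^sup>2 * c1 t) r) powr (1 / q))
       (at_right 0)"
    using ev_at_right01 by eventually_elim (use ineq in auto)
  have pwv: "pw1 z m (1 - z) r = z" "pw2 z m (1 - z) r = m" "pw3 z m (1 - z) r = 1 - z"
     "pw1 z 0 0 r = z powr r" "pw2 z 0 0 r = 0" "pw3 z 0 0 r = 0"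
    using pw_rank1[OF z r(1)] pw_diag[OF z(1) r(1)] m_def by auto
  have S0: "ev1 ((1 - \<alpha>) * pw1 z m (1 - z) r + \<alpha> * pw1 z 0 0 r)
           ((1 - \<alpha>) * pw2 z m (1 - z) r + \<alpha> * pw2 z 0 0 r)
           ((1 - \<alpha>) * pw3 z m (1 - z) r + \<alpha> * pw3 z 0 0 r) =
        ev1 ((1 - \<alpha>) * z + (1 - (1 - \<alpha>)) * z powr r) ((1 - \<alpha>) * m) ((1 - \<alpha>) * (1 - z))"
    unfolding pwv by simp
  have pos: "ev1 ((1 - \<alpha>) * z + (1 - (1 - \<alpha>)) * z powr r) ((1 - \<alpha>) * m) ((1 - \<alpha>) * (1 - z)) \<noteq> 0"
  proof -
    have "(1 - \<alpha>) * z + (1 - (1 - \<alpha>)) * z powr r > 0" using al z by (simp add: add_pos_nonneg)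
    moreover have "ev1 ((1 - \<alpha>) * z + (1 - (1 - \<alpha>)) * z powr r) ((1 - \<alpha>) * m) ((1 - \<alpha>) * (1 - z))
       \<ge> (1 - \<alpha>) * z + (1 - (1 - \<alpha>)) * z powr r"
      using ev1_ge[of "(1 - \<alpha>) * z + (1 - (1 - \<alpha>)) * z powr r" "(1 - \<alpha>) * m" "(1 - \<alpha>) * (1 - z)"] by blast
    ultimately show ?thesis by linarith
  qed
  have "z powr (1 / p) \<le> ev1 ((1 - \<alpha>) * z + (1 - (1 - \<alpha>)) * z powr r) ((1 - \<alpha>) * m) ((1 - \<alpha>) * (1 - z)) powr (1 / q)"
    using limit_step[OF lim(1,2,3) lim(1,4,5) ne1 ne2 evp1 evp2 r(1) _ lim(1) _ evi] pos S0 z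
    by simp
  thus False using contra_final[OF w r p q r_def] unfolding z_def u_def m_def by simp
qed

lemma case2:
  fixes \<alpha> p q :: real
  assumes al: "0 < \<alpha>" "\<alpha> < 1" and p: "p > 0" and q: "q > 0"
    and H: "\<forall>A B. posdef2 A \<longrightarrow> posdef2 B \<longrightarrow> lam1 (SG \<alpha> p A B) \<le> lam1 (AM \<alpha> q A B)"
  shows "q / p \<ge> 1 - \<alpha>"
proof (rule ccontr)
  assume "\<not> q / p \<ge> 1 - \<alpha>"
  define r where "r = q / p"
  have r: "0 < r" "r < 1 - \<alpha>" using \<open>\<not> q / p \<ge> 1 - \<alpha>\<close> p q unfolding r_def by auto
  have w: "0 < \<alpha>" "\<alpha> < 1" using al by auto
  define u where "u = (1 - \<alpha> - r) / 2"
  define z where "z = 1 - u"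
  have z: "0 < z" "z < 1" using setup_z[OF w r] unfolding z_def u_def by auto
  define m where "m = sqrt (z * (1 - z))"
  define a1 where "a1 = (\<lambda>t::real. z + (1 - z) * t)"
  define b1 where "b1 = (\<lambda>t::real. m * (1 - t))"
  define c1 where "c1 = (\<lambda>t::real. (1 - z) + z * t)"
  have pc: "posc (a1 t) (b1 t) (c1 t)" if "0 < t" for t
    using posc_family[OF z that] unfolding a1_def b1_def c1_def m_def .
  have pcX: "posc (a1 t) (t * b1 t) (t\<^sup>2 * c1 t)" if "0 < t" for t
    using posc_Y[OF pc[OF that] that] .
  have ineq: "a1 t powr (1 / p) \<le>
       ev1 ((1 - \<alpha>) * pw1 (a1 t) (t * b1 t) (t\<^sup>2 * c1 t) r + \<alpha> * pw1 (a1 t) (b1 t) (c1 t) r)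
           ((1 - \<alpha>) * pw2 (a1 t) (t * b1 t) (t\<^sup>2 * c1 t) r + \<alpha> * pw2 (a1 t) (b1 t) (c1 t) r)
           ((1 - \<alpha>) * pw3 (a1 t) (t * b1 t) (t\<^sup>2 * c1 t) r + \<alpha> * pw3 (a1 t) (b1 t) (c1 t) r) powr (1 / q)"
    if t: "0 < t" for t
  proof -
    have k: "1 / t > 0" using t by simp
    have kb: "1 / t * (t * b1 t) = b1 t" and kc: "(1 / t)\<^sup>2 * (t\<^sup>2 * c1 t) = c1 t"
      using t by (simp_all add: power_divide)
    note C = chain[OF pcX[OF t] k al p q, unfolded kb kc]
    have "a1 t powr (1 / p) \<le> lam1 (SG \<alpha> p (mpow (m2 (a1 t) (t * b1 t) (t * b1 t) (t\<^sup>2 * c1 t)) (1 / p))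
          (mpow (m2 (a1 t) (b1 t) (b1 t) (c1 t)) (1 / p)))" using C(3) .
    also have "\<dots> \<le> lam1 (AM \<alpha> q (mpow (m2 (a1 t) (t * b1 t) (t * b1 t) (t\<^sup>2 * c1 t)) (1 / p))
          (mpow (m2 (a1 t) (b1 t) (b1 t) (c1 t)) (1 / p)))"
      using H C(1,2) by blast
    finally show ?thesis unfolding C(4) r_def .
  qed
  have lim: "(a1 \<longlongrightarrow> z) (at_right 0)" "(b1 \<longlongrightarrow> m) (at_right 0)" "(c1 \<longlongrightarrow> 1 - z) (at_right 0)"
     "((\<lambda>t. t * b1 t) \<longlongrightarrow> 0) (at_right 0)" "((\<lambda>t. t\<^sup>2 * c1 t) \<longlongrightarrow> 0) (at_right 0)"
    unfolding a1_def b1_def c1_def by (auto intro!: tendsto_eq_intros)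
  have ne1: "ev1 z m (1 - z) \<noteq> ev2 z m (1 - z)" using ev_rank1[OF z] m_def by simp
  have ne2: "ev1 z 0 0 \<noteq> ev2 z 0 0" using ev_diag[of z] z by simp
  have evp1: "eventually (\<lambda>t. posc (a1 t) (b1 t) (c1 t)) (at_right 0)"
    using ev_at_right01 by eventually_elim (use pc in auto)
  have evp2: "eventually (\<lambda>t. posc (a1 t) (t * b1 t) (t\<^sup>2 * c1 t)) (at_right 0)"
    using ev_at_right01 by eventually_elim (use pcX in auto)
  have evi: "eventually (\<lambda>t. a1 t powr (1 / p) \<le>
       ev1 ((1 - \<alpha>) * pw1 (a1 t) (t * b1 t) (t\<^sup>2 * c1 t) r + \<alpha> * pw1 (a1 t) (b1 t) (c1 t) r)
           ((1 - \<alpha>) * pw2 (a1 t) (t * b1 t) (t\<^sup>2 * c1 t) r + \<alpha> * pw2 (a1 t) (b1 t) (c1 t) r)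
           ((1 - \<alpha>) * pw3 (a1 t) (t * b1 t) (t\<^sup>2 * c1 t) r + \<alpha> * pw3 (a1 t) (b1 t) (c1 t) r) powr (1 / q))
       (at_right 0)"
    using ev_at_right01 by eventually_elim (use ineq in auto)
  have pwv: "pw1 z m (1 - z) r = z" "pw2 z m (1 - z) r = m" "pw3 z m (1 - z) r = 1 - z"
     "pw1 z 0 0 r = z powr r" "pw2 z 0 0 r = 0" "pw3 z 0 0 r = 0"
    using pw_rank1[OF z r(1)] pw_diag[OF z(1) r(1)] m_def by auto
  have S0: "ev1 ((1 - \<alpha>) * pw1 z 0 0 r + \<alpha> * pw1 z m (1 - z) r)
           ((1 - \<alpha>) * pw2 z 0 0 r + \<alpha> * pw2 z m (1 - z) r)
           ((1 - \<alpha>) * pw3 z 0 0 r + \<alpha> * pw3 z m (1 - z) r) =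
        ev1 (\<alpha> * z + (1 - \<alpha>) * z powr r) (\<alpha> * m) (\<alpha> * (1 - z))"
    unfolding pwv by (simp add: add.commute)
  have pos: "ev1 (\<alpha> * z + (1 - \<alpha>) * z powr r) (\<alpha> * m) (\<alpha> * (1 - z)) \<noteq> 0"
  proof -
    have "\<alpha> * z + (1 - \<alpha>) * z powr r > 0" using al z by (simp add: add_pos_nonneg)
    moreover have "ev1 (\<alpha> * z + (1 - \<alpha>) * z powr r) (\<alpha> * m) (\<alpha> * (1 - z))
       \<ge> \<alpha> * z + (1 - \<alpha>) * z powr r"
      using ev1_ge[of "\<alpha> * z + (1 - \<alpha>) * z powr r" "\<alpha> * m" "\<alpha> * (1 - z)"] by blast
    ultimately show ?thesis by linarith
  qed
  have "z powr (1 / p) \<le> ev1 (\<alpha> * z + (1 - \<alpha>) * z powr r) (\<alpha> * m) (\<alpha> * (1 - z)) powr (1 / q)"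
    using limit_step[OF lim(1,4,5) lim(1,2,3) ne2 ne1 evp2 evp1 r(1) _ lim(1) _ evi] pos S0 z
    by simp
  thus False using contra_final[OF w r p q r_def] unfolding z_def u_def m_def by simp
qed


theorem theorem4p27:
  fixes \<alpha> p q :: real
  assumes "0 < \<alpha>" and "\<alpha> < 1" and "0 < p" and "0 < q"
  shows "((\<forall>A B. posdef2 A \<longrightarrow> posdef2 B \<longrightarrow> lam1 (SG \<alpha> p A B) \<le> lam1 (AM \<alpha> q A B))
            \<longrightarrow> q / p \<ge> max \<alpha> (1 - \<alpha>))
       \<and> ((\<forall>A B. posdef2 A \<longrightarrow> posdef2 B \<longrightarrow> weak_maj2 (SG \<alpha> p A B) (AM \<alpha> q A B))
            \<longrightarrow> q / p \<ge> max \<alpha> (1 - \<alpha>))"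
proof -
  have 1: "(\<forall>A B. posdef2 A \<longrightarrow> posdef2 B \<longrightarrow> lam1 (SG \<alpha> p A B) \<le> lam1 (AM \<alpha> q A B))
            \<longrightarrow> q / p \<ge> max \<alpha> (1 - \<alpha>)"
  proof
    assume H: "\<forall>A B. posdef2 A \<longrightarrow> posdef2 B \<longrightarrow> lam1 (SG \<alpha> p A B) \<le> lam1 (AM \<alpha> q A B)"
    have "q / p \<ge> \<alpha>" using case1[OF assms(1,2,3,4) H] .
    moreover have "q / p \<ge> 1 - \<alpha>" using case2[OF assms(1,2,3,4) H] .
    ultimately show "q / p \<ge> max \<alpha> (1 - \<alpha>)" by simp
  qed
  have 2: "(\<forall>A B. posdef2 A \<longrightarrow> posdef2 B \<longrightarrow> weak_maj2 (SG \<alpha> p A B) (AM \<alpha> q A B))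
            \<longrightarrow> q / p \<ge> max \<alpha> (1 - \<alpha>)"
  proof
    assume "\<forall>A B. posdef2 A \<longrightarrow> posdef2 B \<longrightarrow> weak_maj2 (SG \<alpha> p A B) (AM \<alpha> q A B)"
    hence "\<forall>A B. posdef2 A \<longrightarrow> posdef2 B \<longrightarrow> lam1 (SG \<alpha> p A B) \<le> lam1 (AM \<alpha> q A B)"
      unfolding weak_maj2_def by blast
    thus "q / p \<ge> max \<alpha> (1 - \<alpha>)" using 1 by blast
  qed
  show ?thesis using 1 2 by blast
qed

end
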